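(* Let $(\Omega,\mathcal F,\mathbb P)$ be a probability space, $1\le p<+\infty$, $q$ with $1/p+1/q=1$, $\mathbb X=\mathbb R^{n}$ with the Euclidean scalar product $\langle\cdot,\cdot\rangle$, $\mathbb U=\mathbb R^{m}$, $\mathbb W=\mathbb R^{k}$, $\mathbb Y=L^p(\Omega,\mathcal F,\mathbb P;\mathbb R^{n})$ and $\mathbb Y^\sharp=L^q(\Omega,\mathcal F,\mathbb P;\mathbb R^{n})$. Let $T\ge1$ be an integer, $(\mathbf W_t)_{t=1,\dots,T}$ random variables with values in $\mathbb W$, and for $t=0,\dots,T-1$ let $f_t:\mathbb X\times\mathbb U\times\mathbb W\to\mathbb X$ and $L_t:\mathbb X\times\mathbb U\times\mathbb W\to[0,+\infty]$, and $\Phi:\mathbb X\to[0,+\infty]$ be given. Assume: (a) for all $(x,u)$, $f_t(x,u,\mathbf W_{t+1})\in\mathbb Y$; (b) the $L_t$ and $\Phi$ are nonnegative measurable functions. Define the Bellman functions $V_T=\Phi$ and, for $t=T-1,\dots,0$, $V_t(x)=\inf\mathbb E\big[\sum_{s=t}^{T-1}L_s(\mathbf X_s,\mathbf U_s,\mathbf W_{s+1})\mathbin{\overset{\cdot}{+}}\Phi(\mathbf X_T)\big]$, the infimum being over processes with $\mathbf X_t=x$, $\mathbf X_{s+1}=f_s(\mathbf X_s,\mathbf U_s,\mathbf W_{s+1})$ and $\sigma(\mathbf U_s)\subset\sigma(\mathbf X_s)$ for $s=t,\dots,T-1$. Assume moreover that the $V_t$ are measurable and satisfy the Bellman equation $V_t(x)=\inf_{u\in\mathbb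 U}\mathbb E\big[L_t(x,u,\mathbf W_{t+1})\mathbin{\overset{\cdot}{+}} V_{t+1}(f_t(x,u,\mathbf W_{t+1}))\big]$ for $t=T-1,\dots,0$ and all $x$. Define the Hamiltonian $H(x,u,\mathbf X^\sharp)=\mathbb E\big[L_t(x,u,\mathbf W_{t+1})\mathbin{\overset{\cdot}{+}}\langle f_t(x,u,\mathbf W_{t+1}),\mathbf X^\sharp\rangle\big]$ for $(x,u,\mathbf X^\sharp)\in\mathbb X\times\mathbb U\times\mathbb Y^\sharp$. Then for all $t=T-1,\dots,0$ and $x\in\mathbb X$, $$V_t(x)=\inf_{\mathbf X\in\mathbb Y}\Big(\inf_{u\in\mathbb U}\ \sup_{\mathbf X^\sharp\in\mathbb Y^\sharp}\big(\mathbb E[\langle-\mathbf X,\mathbf X^\sharp\rangle]\mathbin{\underset{\cdot}{+}} H(x,u,\mathbf X^\sharp)\big)\mathbin{\overset{\cdot}{+}}\mathbb E[V_{t+1}(\mathbf X)]\Big),$$ and, writing $V_t^\star(x^\sharp)=\sup_{x\in\mathbb X}\big(\langle x,x^\sharp\rangle\mathbin{\underset{\cdot}{+}}(-V_t(x))\big)$, for all $t=T-1,\dots,0$ and $x^\sharp\in\mathbb R^{n}$, $$V_t^\star(x^\sharp)\le\inf_{\mathbf X^\sharp\in\mathbb Y^\sharp}\Big(\sup_{u\in\mathbb U}\ \sup_{x\in\mathbb X}\big(\langle x,x^\sharp\rangle\mathbin{\underset{\cdot}{+}}(-H(x,u,\mathbf X^\sharp))\big)\mathbin{\overset{\cdot}{+}}\mathbb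 E\big[V_{t+1}^\star(\mathbf X^\sharp)\big]\Big).$$
   Context: $\overline{\mathbb R}=[-\infty,+\infty]$. The Moreau lower addition $\mathbin{\underset{\cdot}{+}}$ is usual addition extended by $(+\infty)\mathbin{\underset{\cdot}{+}}(-\infty)=(-\infty)\mathbin{\underset{\cdot}{+}}(+\infty)=-\infty$; the Moreau upper addition $\mathbin{\overset{\cdot}{+}}$ is usual addition extended by $(+\infty)\mathbin{\overset{\cdot}{+}}(-\infty)=(-\infty)\mathbin{\overset{\cdot}{+}}(+\infty)=+\infty$. The Hamiltonian $H$ depends on $t$ (through $L_t,f_t$); in each displayed formula for index $t$ it is the one built from $L_t,f_t$. $\mathbb E[V_{t+1}^\star(\mathbf X^\sharp)]$ denotes the expectation of the random variable $\omega\mapsto V_{t+1}^\star(\mathbf X^\sharp(\omega))$. *)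

theory Defs
  imports "HOL-Probability.Probability"
begin

text \<open>Moreau upper addition (Isabelle's ereal addition already is upper addition:
  inf + -inf = inf); we define it explicitly for readability.\<close>
definition upper_add :: "ereal \<Rightarrow> ereal \<Rightarrow> ereal" (infixl "+\<^sup>u" 65) where
  "upper_add a b = (if (a = \<infinity> \<and> b = -\<infinity>) \<or> (a = -\<infinity> \<and> b = \<infinity>) then \<infinity> else a + b)"

definition lower_add :: "ereal \<Rightarrow> ereal \<Rightarrow> ereal" (infixl "+\<^sub>l" 65) where
  "lower_add a b = (if (a = \<infinity> \<and> b = -\<infinity>) \<or> (a = -\<infinity> \<and> b = \<infinity>) then -\<infinity> else a + b)"

text \<open>Expectation of an extended-real random variable:
  E[Z] = E[Z+] (upper +) (- E[Z-]), i.e. with the convention +inf - inf = +inf.\<close>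
definition Eexp :: "'a measure \<Rightarrow> ('a \<Rightarrow> ereal) \<Rightarrow> ereal" where
  "Eexp M Z = upper_add (enn2ereal (\<integral>\<^sup>+ w. e2ennreal (Z w) \<partial>M))
                        (- enn2ereal (\<integral>\<^sup>+ w. e2ennreal (- Z w) \<partial>M))"

definition in_Lp :: "real \<Rightarrow> 'a measure \<Rightarrow> ('a \<Rightarrow> real^'n) \<Rightarrow> bool" where
  "in_Lp p M X \<longleftrightarrow> X \<in> borel_measurable M \<and> integrable M (\<lambda>w. norm (X w) powr p)"

definition in_Linf :: "'a measure \<Rightarrow> ('a \<Rightarrow> real^'n) \<Rightarrow> bool" where
  "in_Linf M X \<longleftrightarrow> X \<in> borel_measurable M \<and> (\<exists>C. AE w in M. norm (X w) \<le> C)"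

definition in_Lconj :: "real \<Rightarrow> 'a measure \<Rightarrow> ('a \<Rightarrow> real^'n) \<Rightarrow> bool" where
  "in_Lconj p M X \<longleftrightarrow> (if p = 1 then in_Linf M X else in_Lp (p / (p - 1)) M X)"

definition admissible ::
  "'a measure \<Rightarrow> nat \<Rightarrow> (nat \<Rightarrow> real^'n \<Rightarrow> real^'m \<Rightarrow> real^'k \<Rightarrow> real^'n)
   \<Rightarrow> (nat \<Rightarrow> 'a \<Rightarrow> real^'k) \<Rightarrow> nat \<Rightarrow> real^'n
   \<Rightarrow> ((nat \<Rightarrow> 'a \<Rightarrow> real^'n) \<times> (nat \<Rightarrow> 'a \<Rightarrow> real^'m)) set" where
  "admissible M T f W t x =
     {(X, U). (\<forall>w\<in>space M. X t w = x)
        \<and> (\<forall>s\<in>{t..<T}. \<forall>w\<in>space M. X (Suc s) w = f s (X s w) (U s w) (W (Suc s) w))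
        \<and> (\<forall>s\<in>{t..<T}. U s \<in> measurable (vimage_algebra (space M) (X s) borel) borel)}"

definition Ham ::
  "'a measure \<Rightarrow> (nat \<Rightarrow> real^'n \<Rightarrow> real^'m \<Rightarrow> real^'k \<Rightarrow> ereal)
   \<Rightarrow> (nat \<Rightarrow> real^'n \<Rightarrow> real^'m \<Rightarrow> real^'k \<Rightarrow> real^'n)
   \<Rightarrow> (nat \<Rightarrow> 'a \<Rightarrow> real^'k) \<Rightarrow> nat \<Rightarrow> real^'n \<Rightarrow> real^'m \<Rightarrow> ('a \<Rightarrow> real^'n) \<Rightarrow> ereal" where
  "Ham M L f W t x u Xs =
     Eexp M (\<lambda>w. upper_add (L t x u (W (Suc t) w)) (ereal (inner (f t x u (W (Suc t) w)) (Xs w))))"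

definition fconj :: "(real^'n \<Rightarrow> ereal) \<Rightarrow> real^'n \<Rightarrow> ereal" where
  "fconj V xs = (SUP x. lower_add (ereal (inner x xs)) (- V x))"

end

theory Submission
  imports Defs
begin

lemma upper_add_eq: "upper_add a b = a + b"
  by (cases a; cases b) (auto simp: upper_add_def)

lemma lower_add_ereal: "lower_add (ereal r) b = ereal r + b"
  by (cases b) (auto simp: lower_add_def)

lemma e2ennreal_add: "0 \<le> a \<Longrightarrow> 0 \<le> b \<Longrightarrow> e2ennreal (a + b) = e2ennreal a + e2ennreal b"
  by (simp add: plus_ennreal.abs_eq eq_onp_def)

lemma Eexp_nonneg:
  assumes "\<And>w. w \<in> space M \<Longrightarrow> 0 \<le> Z w"
  shows "Eexp M Z = enn2ereal (\<integral>\<^sup>+ w. e2ennreal (Z w) \<partial>M)"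
proof -
  have "(\<integral>\<^sup>+ w. e2ennreal (- Z w) \<partial>M) = (\<integral>\<^sup>+ w. 0 \<partial>M)"
    by (rule nn_integral_cong) (simp add: assms e2ennreal_neg)
  then show ?thesis by (simp add: Eexp_def upper_add_eq zero_ennreal.rep_eq)
qed

lemma Eexp_ge0:
  assumes "\<And>w. w \<in> space M \<Longrightarrow> 0 \<le> Z w"
  shows "0 \<le> Eexp M Z"
  by (simp add: Eexp_nonneg[OF assms])

lemma Eexp_mono:
  assumes "\<And>w. w \<in> space M \<Longrightarrow> Z1 w \<le> Z2 w"
  shows "Eexp M Z1 \<le> Eexp M Z2"
proof -
  have a: "(\<integral>\<^sup>+ w. e2ennreal (Z1 w) \<partial>M) \<le> (\<integral>\<^sup>+ w. e2ennreal (Z2 w) \<partial>M)"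
    by (rule nn_integral_mono) (simp add: assms e2ennreal_mono)
  have b: "(\<integral>\<^sup>+ w. e2ennreal (- Z2 w) \<partial>M) \<le> (\<integral>\<^sup>+ w. e2ennreal (- Z1 w) \<partial>M)"
    by (rule nn_integral_mono) (simp add: assms e2ennreal_mono)
  show ?thesis unfolding Eexp_def upper_add_eq
    using a b by (intro add_mono) (auto simp: less_eq_ennreal.rep_eq)
qed

lemma enn2ereal_fin: "x < \<infinity> \<Longrightarrow> enn2ereal x = ereal (enn2real x)"
  by (cases x rule: ennreal_cases) auto

lemma Eexp_int:
  assumes g: "integrable M g" and Z: "AE w in M. Z w = ereal (g w)"
  shows "Eexp M Z = ereal (\<integral>w. g w \<partial>M)"
proof -
  have P: "(\<integral>\<^sup>+ w. e2ennreal (Z w) \<partial>M) = (\<integral>\<^sup>+ w. ennreal (g w) \<partial>M)"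
    by (rule nn_integral_cong_AE) (use Z in auto)
  have N: "(\<integral>\<^sup>+ w. e2ennreal (- Z w) \<partial>M) = (\<integral>\<^sup>+ w. ennreal (- g w) \<partial>M)"
    by (rule nn_integral_cong_AE) (use Z in auto)
  have fin1: "(\<integral>\<^sup>+ w. ennreal (g w) \<partial>M) < \<infinity>"
    using integrableD(2)[OF g] by (metis less_top infinity_ennreal_def)
  have fin2: "(\<integral>\<^sup>+ w. ennreal (- g w) \<partial>M) < \<infinity>"
    using integrableD(3)[OF g] by (metis less_top infinity_ennreal_def)
  show ?thesis
    unfolding Eexp_def upper_add_eq P N real_lebesgue_integral_def[OF g]
    by (simp only: enn2ereal_fin[OF fin1] enn2ereal_fin[OF fin2] uminus_ereal.simps plus_ereal.simps diff_conv_add_uminus)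
qed

lemma ereal_fin_int:
  assumes m: "Lf \<in> borel_measurable M" and nn: "\<And>w. w \<in> space M \<Longrightarrow> 0 \<le> Lf w"
    and fin: "(\<integral>\<^sup>+ w. e2ennreal (Lf w) \<partial>M) < \<infinity>"
  obtains r where "integrable M r" "AE w in M. Lf w = ereal (r w)"
    "enn2ereal (\<integral>\<^sup>+ w. e2ennreal (Lf w) \<partial>M) = ereal (\<integral>w. r w \<partial>M)"
proof -
  define r where "r w = real_of_ereal (Lf w)" for w
  have rm: "r \<in> borel_measurable M" unfolding r_def using m by measurable
  have "AE w in M. e2ennreal (Lf w) \<noteq> \<infinity>"
    by (rule nn_integral_noteq_infinite) (use m fin in \<open>auto\<close>)
  then have ae: "AE w in M. Lf w = ereal (r w)"
  proof (rule AE_mp, intro AE_I2 impI)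
    fix w assume "w \<in> space M" "e2ennreal (Lf w) \<noteq> \<infinity>"
    with nn[of w] show "Lf w = ereal (r w)" unfolding r_def
      by (cases "Lf w") (auto simp: e2ennreal_infty)
  qed
  have rnn: "AE w in M. 0 \<le> r w" using nn unfolding r_def by (auto intro!: AE_I2 real_of_ereal_pos)
  have eq: "(\<integral>\<^sup>+ w. e2ennreal (Lf w) \<partial>M) = (\<integral>\<^sup>+ w. ennreal (r w) \<partial>M)"
    by (rule nn_integral_cong_AE) (use ae in auto)
  have "(\<integral>\<^sup>+ w. ennreal (norm (r w)) \<partial>M) = (\<integral>\<^sup>+ w. ennreal (r w) \<partial>M)"
    by (rule nn_integral_cong_AE) (use rnn in auto)
  then have int: "integrable M r"
    using fin eq rm by (intro integrableI_bounded) auto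
  have "(\<integral>w. r w \<partial>M) = enn2real (\<integral>\<^sup>+ w. ennreal (r w) \<partial>M)"
    by (rule integral_eq_nn_integral[OF rm rnn])
  then have "enn2ereal (\<integral>\<^sup>+ w. e2ennreal (Lf w) \<partial>M) = ereal (\<integral>w. r w \<partial>M)"
    using enn2ereal_fin[OF fin] eq by simp
  then show ?thesis using that int ae by blast
qed
lemma pw_ineq: "0 \<le> l \<Longrightarrow> e2ennreal l \<le> e2ennreal (ereal g + l) + ennreal \<bar>g\<bar>"
proof (cases l)
  case (real x)
  assume "0 \<le> l"
  then have x: "0 \<le> x" using real by simp
  have "ennreal x \<le> ennreal (max 0 (g + x) + \<bar>g\<bar>)" by (intro ennreal_leI) auto
  also have "\<dots> = ennreal (max 0 (g + x)) + ennreal \<bar>g\<bar>" by (rule ennreal_plus) auto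
  also have "ennreal (max 0 (g + x)) = ennreal (g + x)" by (simp add: ennreal_max_0)
  finally show ?thesis using real by simp
qed (auto simp: e2ennreal_infty)
lemma LL_meas:
  fixes L :: "real^'n::finite \<Rightarrow> real^'m::finite \<Rightarrow> real^'k::finite \<Rightarrow> ereal"
  assumes "(\<lambda>(x, u, w). L x u w) \<in> borel_measurable borel" "Wt \<in> borel_measurable M"
  shows "(\<lambda>w. L x u (Wt w)) \<in> borel_measurable M"
proof -
  have "(\<lambda>w. (x, u, Wt w)) \<in> measurable M (borel \<Otimes>\<^sub>M (borel \<Otimes>\<^sub>M borel))"
    using assms(2) by measurable
  then have "(\<lambda>w. (x, u, Wt w)) \<in> measurable M borel" by (simp add: borel_prod)
  from measurable_compose[OF this assms(1)] show ?thesis by simp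
qed

lemma E_add:
  assumes g: "integrable M g" and m: "Lf \<in> borel_measurable M"
    and nn: "\<And>w. w \<in> space M \<Longrightarrow> 0 \<le> Lf w"
  shows "Eexp M (\<lambda>w. ereal (g w) + Lf w) = ereal (\<integral>w. g w \<partial>M) + enn2ereal (\<integral>\<^sup>+ w. e2ennreal (Lf w) \<partial>M)"
proof (cases "(\<integral>\<^sup>+ w. e2ennreal (Lf w) \<partial>M) < \<infinity>")
  case True
  obtain r where r: "integrable M r" "AE w in M. Lf w = ereal (r w)"
    "enn2ereal (\<integral>\<^sup>+ w. e2ennreal (Lf w) \<partial>M) = ereal (\<integral>w. r w \<partial>M)"
    using ereal_fin_int[OF m nn True] by blast
  have "Eexp M (\<lambda>w. ereal (g w) + Lf w) = ereal (\<integral>w. g w + r w \<partial>M)"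
    by (rule Eexp_int) (use g r in auto)
  also have "\<dots> = ereal (\<integral>w. g w \<partial>M) + ereal (\<integral>w. r w \<partial>M)"
    using g r by simp
  finally show ?thesis using r by simp
next
  case False
  have inf: "(\<integral>\<^sup>+ w. e2ennreal (Lf w) \<partial>M) = \<infinity>" using False by (metis infinity_ennreal_def less_top)
  have gm: "g \<in> borel_measurable M" using g by auto
  have "(\<integral>\<^sup>+ w. e2ennreal (Lf w) \<partial>M) \<le> (\<integral>\<^sup>+ w. e2ennreal (ereal (g w) + Lf w) + ennreal \<bar>g w\<bar> \<partial>M)"
    by (rule nn_integral_mono) (simp add: nn pw_ineq)
  also have "\<dots> = (\<integral>\<^sup>+ w. e2ennreal (ereal (g w) + Lf w) \<partial>M) + (\<integral>\<^sup>+ w. ennreal \<bar>g w\<bar> \<partial>M)"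
    by (rule nn_integral_add) (use m gm in measurable)
  finally have le: "\<infinity> \<le> (\<integral>\<^sup>+ w. e2ennreal (ereal (g w) + Lf w) \<partial>M) + (\<integral>\<^sup>+ w. ennreal \<bar>g w\<bar> \<partial>M)"
    unfolding inf .
  have "(\<integral>\<^sup>+ w. ennreal (norm (g w)) \<partial>M) < \<infinity>" using g integrable_iff_bounded by blast
  then have I: "(\<integral>\<^sup>+ w. ennreal \<bar>g w\<bar> \<partial>M) \<noteq> \<infinity>" by simp
  have "(\<integral>\<^sup>+ w. e2ennreal (ereal (g w) + Lf w) \<partial>M) = \<infinity>"
    using le I by (metis ennreal_add_eq_top infinity_ennreal_def top_unique)
  then show ?thesis using inf by (simp add: Eexp_def upper_add_eq)
qed

lemma E_sub:
  assumes g: "integrable M g" and m: "Lf \<in> borel_measurable M"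
    and nn: "\<And>w. w \<in> space M \<Longrightarrow> 0 \<le> Lf w"
    and fin: "(\<integral>\<^sup>+ w. e2ennreal (Lf w) \<partial>M) < \<infinity>"
  shows "Eexp M (\<lambda>w. ereal (g w) - Lf w) = ereal (\<integral>w. g w \<partial>M) - enn2ereal (\<integral>\<^sup>+ w. e2ennreal (Lf w) \<partial>M)"
proof -
  obtain r where r: "integrable M r" "AE w in M. Lf w = ereal (r w)"
    "enn2ereal (\<integral>\<^sup>+ w. e2ennreal (Lf w) \<partial>M) = ereal (\<integral>w. r w \<partial>M)"
    using ereal_fin_int[OF m nn fin] by blast
  have "Eexp M (\<lambda>w. ereal (g w) - Lf w) = ereal (\<integral>w. g w - r w \<partial>M)"
    by (rule Eexp_int) (use g r in auto)
  also have "\<dots> = ereal (\<integral>w. g w \<partial>M) - ereal (\<integral>w. r w \<partial>M)"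
    using g r by simp
  finally show ?thesis using r by simp
qed

lemma norm_le_powr: "1 \<le> p \<Longrightarrow> norm (x::real^'n) \<le> 1 + norm x powr p"
proof (cases "norm x \<le> 1")
  case True
  then show ?thesis by (smt (verit) powr_ge_zero)
next
  case False
  assume p: "1 \<le> p"
  have "norm x = norm x powr 1" using False by simp
  also have "\<dots> \<le> norm x powr p" using False p by (intro powr_mono) auto
  finally show ?thesis by simp
qed

lemma Lp_int_norm:
  assumes "in_Lp p M X" "1 \<le> p" "finite_measure M"
  shows "integrable M (\<lambda>w. norm (X w))"
proof (rule Bochner_Integration.integrable_bound[where f="\<lambda>w. 1 + norm (X w) powr p"])
  show "integrable M (\<lambda>w. 1 + norm (X w) powr p)"
    using assms by (intro Bochner_Integration.integrable_add) (auto simp: in_Lp_def finite_measure.integrable_const)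
  show "(\<lambda>w. norm (X w)) \<in> borel_measurable M" using assms by (auto simp: in_Lp_def)
  show "AE w in M. norm (norm (X w)) \<le> norm (1 + norm (X w) powr p)"
    using norm_le_powr[OF assms(2)] by (auto intro!: AE_I2 simp: abs_of_nonneg add_nonneg_nonneg)
qed

lemma inner_int:
  assumes prob: "prob_space M" and p: "1 \<le> p" and F: "in_Lp p M F" and Y: "in_Lconj p M Y"
  shows "integrable M (\<lambda>w. inner (F w) (Y w))"
proof -
  have fm: "finite_measure M" using prob by (simp add: prob_space_def)
  have Fm: "F \<in> borel_measurable M" using F by (simp add: in_Lp_def)
  have nF: "integrable M (\<lambda>w. norm (F w))" using Lp_int_norm[OF F p fm] .
  show ?thesis
  proof (cases "p = 1")
    case True
    then have Y': "in_Linf M Y" using Y by (simp add: in_Lconj_def)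
    then obtain C where C: "AE w in M. norm (Y w) \<le> C" and Ym: "Y \<in> borel_measurable M"
      by (auto simp: in_Linf_def)
    show ?thesis
    proof (rule Bochner_Integration.integrable_bound[where f="\<lambda>w. \<bar>C\<bar> * norm (F w)"])
      show "integrable M (\<lambda>w. \<bar>C\<bar> * norm (F w))" using nF by simp
      show "(\<lambda>w. F w \<bullet> Y w) \<in> borel_measurable M" using Fm Ym by (rule borel_measurable_inner)
      show "AE w in M. norm (F w \<bullet> Y w) \<le> norm (\<bar>C\<bar> * norm (F w))"
        using C
      proof (rule AE_mp, intro AE_I2 impI)
        fix w assume "norm (Y w) \<le> C"
        then have "\<bar>F w \<bullet> Y w\<bar> \<le> norm (F w) * \<bar>C\<bar>"
          by (smt (verit) Cauchy_Schwarz_ineq2 mult_left_mono norm_ge_zero)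
        then show "norm (F w \<bullet> Y w) \<le> norm (\<bar>C\<bar> * norm (F w))" by (simp add: mult.commute abs_mult)
      qed
    qed
  next
    case False
    define q where "q = p / (p - 1)"
    have p1: "1 < p" using p False by simp
    have q1: "1 < q" using p1 by (simp add: q_def)
    have pq: "1/p + 1/q = 1" using p1 by (simp add: q_def field_simps)
    have Y': "in_Lp q M Y" using Y False by (simp add: in_Lconj_def q_def)
    have Ym: "Y \<in> borel_measurable M" using Y' by (simp add: in_Lp_def)
    show ?thesis
    proof (rule Bochner_Integration.integrable_bound[where f="\<lambda>w. norm (F w) powr p / p + norm (Y w) powr q / q"])
      show "integrable M (\<lambda>w. norm (F w) powr p / p + norm (Y w) powr q / q)"
        using F Y' by (intro Bochner_Integration.integrable_add integrable_divide) (auto simp: in_Lp_def)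
      show "(\<lambda>w. F w \<bullet> Y w) \<in> borel_measurable M" using Fm Ym by (rule borel_measurable_inner)
      show "AE w in M. norm (F w \<bullet> Y w) \<le> norm (norm (F w) powr p / p + norm (Y w) powr q / q)"
      proof (intro AE_I2)
        fix w
        have "\<bar>F w \<bullet> Y w\<bar> \<le> norm (F w) * norm (Y w)" by (rule Cauchy_Schwarz_ineq2)
        also have "\<dots> \<le> norm (F w) powr p / p + norm (Y w) powr q / q"
          by (rule Youngs_inequality[OF p1 q1 pq]) auto
        finally show "norm (F w \<bullet> Y w) \<le> norm (norm (F w) powr p / p + norm (Y w) powr q / q)"
          by simp
      qed
    qed
  qed
qed

lemma enn2ereal_ne_top: "enn2ereal X \<noteq> \<infinity> \<Longrightarrow> X < \<infinity>"
  by (cases X rule: ennreal_cases) auto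

lemma lower_add_0: "lower_add 0 b = b"
  by (simp add: lower_add_def)

theorem proposition5:
  fixes M :: "'a measure" and p :: real and T :: nat
    and W :: "nat \<Rightarrow> 'a \<Rightarrow> real^'k::finite"
    and f :: "nat \<Rightarrow> real^'n::finite \<Rightarrow> real^'m::finite \<Rightarrow> real^'k \<Rightarrow> real^'n"
    and L :: "nat \<Rightarrow> real^'n \<Rightarrow> real^'m \<Rightarrow> real^'k \<Rightarrow> ereal"
    and \<Phi> :: "real^'n \<Rightarrow> ereal"
    and V :: "nat \<Rightarrow> real^'n \<Rightarrow> ereal"
  assumes prob: "prob_space M"
    and p: "1 \<le> p"
    and T: "1 \<le> T"
    and W_rv: "\<And>t. t \<in> {1..T} \<Longrightarrow> W t \<in> borel_measurable M"
    and f_Lp: "\<And>t x u. t < T \<Longrightarrow> in_Lp p M (\<lambda>w. f t x u (W (Suc t) w))"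
    and L_nonneg: "\<And>t x u w. t < T \<Longrightarrow> 0 \<le> L t x u w"
    and L_meas: "\<And>t. t < T \<Longrightarrow> (\<lambda>(x, u, w). L t x u w) \<in> borel_measurable borel"
    and Phi_nonneg: "\<And>x. 0 \<le> \<Phi> x"
    and Phi_meas: "\<Phi> \<in> borel_measurable borel"
    and V_T: "V T = \<Phi>"
    and V_def: "\<And>t x. t < T \<Longrightarrow> V t x =
        (INF XU \<in> admissible M T f W t x.
           Eexp M (\<lambda>w. upper_add (\<Sum>s\<in>{t..<T}. L s (fst XU s w) (snd XU s w) (W (Suc s) w))
                                 (\<Phi> (fst XU T w))))"
    and V_meas: "\<And>t. t \<le> T \<Longrightarrow> V t \<in> borel_measurable borel"
    and Bellman: "\<And>t x. t < T \<Longrightarrow> V t x =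
        (INF u. Eexp M (\<lambda>w. upper_add (L t x u (W (Suc t) w)) (V (Suc t) (f t x u (W (Suc t) w)))))"
  shows "(\<forall>t<T. \<forall>x. V t x =
            (INF X \<in> {X. in_Lp p M X}.
               upper_add
                 (INF u. SUP Xs \<in> {Xs. in_Lconj p M Xs}.
                    lower_add (Eexp M (\<lambda>w. ereal (inner (- X w) (Xs w)))) (Ham M L f W t x u Xs))
                 (Eexp M (\<lambda>w. V (Suc t) (X w)))))
       \<and> (\<forall>t<T. \<forall>xs. fconj (V t) xs \<le>
            (INF Xs \<in> {Xs. in_Lconj p M Xs}.
               upper_add
                 (SUP u. SUP x. lower_add (ereal (inner x xs)) (- Ham M L f W t x u Xs))
                 (Eexp M (\<lambda>w. fconj (V (Suc t)) (Xs w)))))"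
proof -
  have fm: "finite_measure M" using prob by (simp add: prob_space_def)
  have Wm: "W (Suc t) \<in> borel_measurable M" if "t < T" for t using W_rv that by auto
  have LLm: "(\<lambda>w. L t x u (W (Suc t) w)) \<in> borel_measurable M" if "t < T" for t x u
    using LL_meas[OF L_meas[OF that] Wm[OF that]] .
  have FFm: "(\<lambda>w. f t x u (W (Suc t) w)) \<in> borel_measurable M" if "t < T" for t x u
    using f_Lp[OF that] by (simp add: in_Lp_def)
  have Vnn: "0 \<le> V s y" if "s \<le> T" for s y
  proof (cases "s = T")
    case True then show ?thesis using V_T Phi_nonneg by simp
  next
    case False
    then have s: "s < T" using that by simp
    show ?thesis unfolding V_def[OF s]
    proof (rule INF_greatest, rule Eexp_ge0)
      fix XU w
      show "0 \<le> upper_add (\<Sum>s'\<in>{s..<T}. L s' (fst XU s' w) (snd XU s' w) (W (Suc s') w)) (\<Phi> (fst XU T w))"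
        unfolding upper_add_eq using L_nonneg Phi_nonneg by (intro add_nonneg_nonneg sum_nonneg) auto
    qed
  qed
  have EL: "Eexp M (\<lambda>w. L t x u (W (Suc t) w)) = enn2ereal (\<integral>\<^sup>+ w. e2ennreal (L t x u (W (Suc t) w)) \<partial>M)"
    if "t < T" for t x u
    by (rule Eexp_nonneg) (use L_nonneg that in auto)
  have EV: "Eexp M (\<lambda>w. V (Suc t) (X w)) = enn2ereal (\<integral>\<^sup>+ w. e2ennreal (V (Suc t) (X w)) \<partial>M)"
    if "t < T" for t X
    by (rule Eexp_nonneg) (use Vnn that in auto)
  have Vm: "(\<lambda>w. V (Suc t) (X w)) \<in> borel_measurable M" if "t < T" "X \<in> borel_measurable M" for t X
    using measurable_compose[OF that(2) V_meas[of "Suc t"]] that(1) by simp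
  have split: "Eexp M (\<lambda>w. upper_add (L t x u (W (Suc t) w)) (V (Suc t) (f t x u (W (Suc t) w))))
     = Eexp M (\<lambda>w. L t x u (W (Suc t) w)) + Eexp M (\<lambda>w. V (Suc t) (f t x u (W (Suc t) w)))"
    if t: "t < T" for t x u
  proof -
    have "Eexp M (\<lambda>w. upper_add (L t x u (W (Suc t) w)) (V (Suc t) (f t x u (W (Suc t) w))))
      = enn2ereal (\<integral>\<^sup>+ w. e2ennreal (L t x u (W (Suc t) w) + V (Suc t) (f t x u (W (Suc t) w))) \<partial>M)"
      unfolding upper_add_eq by (rule Eexp_nonneg) (use L_nonneg Vnn t in auto)
    also have "\<dots> = enn2ereal (\<integral>\<^sup>+ w. e2ennreal (L t x u (W (Suc t) w)) + e2ennreal (V (Suc t) (f t x u (W (Suc t) w))) \<partial>M)"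
      using L_nonneg Vnn t by (simp add: e2ennreal_add)
    also have "\<dots> = enn2ereal ((\<integral>\<^sup>+ w. e2ennreal (L t x u (W (Suc t) w)) \<partial>M) + (\<integral>\<^sup>+ w. e2ennreal (V (Suc t) (f t x u (W (Suc t) w))) \<partial>M))"
      by (subst nn_integral_add) (use LLm[OF t] Vm[OF t FFm[OF t]] in auto)
    finally show ?thesis using EL[OF t] EV[OF t] by (simp add: plus_ennreal.rep_eq)
  qed
  have Ham_eq: "Ham M L f W t x u Xs = ereal (\<integral>w. inner (f t x u (W (Suc t) w)) (Xs w) \<partial>M)
      + Eexp M (\<lambda>w. L t x u (W (Suc t) w))"
    if t: "t < T" and Xs: "in_Lconj p M Xs" for t x u Xs
  proof -
    have "Ham M L f W t x u Xs = Eexp M (\<lambda>w. ereal (inner (f t x u (W (Suc t) w)) (Xs w)) + L t x u (W (Suc t) w))"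
      unfolding Ham_def upper_add_eq by (simp add: add.commute)
    also have "\<dots> = ereal (\<integral>w. inner (f t x u (W (Suc t) w)) (Xs w) \<partial>M) + enn2ereal (\<integral>\<^sup>+ w. e2ennreal (L t x u (W (Suc t) w)) \<partial>M)"
      by (rule E_add[OF inner_int[OF prob p f_Lp[OF t] Xs] LLm[OF t]]) (use L_nonneg t in auto)
    finally show ?thesis using EL[OF t] by simp
  qed
  have zero_conj: "in_Lconj p M (\<lambda>w. 0)"
    by (auto simp: in_Lconj_def in_Lp_def in_Linf_def)
  have F1: "Eexp M (\<lambda>w. L t x u (W (Suc t) w)) \<le>
      (SUP Xs \<in> {Xs. in_Lconj p M Xs}. lower_add (Eexp M (\<lambda>w. ereal (inner (- X w) (Xs w)))) (Ham M L f W t x u Xs))"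
    if t: "t < T" for t x u X
  proof (rule SUP_upper2[where i="\<lambda>w. 0"])
    show "(\<lambda>w. 0) \<in> {Xs. in_Lconj p M Xs}" using zero_conj by simp
    have "Eexp M (\<lambda>w. ereal (inner (- X w) 0)) = ereal (\<integral>w. 0 \<partial>M)"
      by (rule Eexp_int) auto
    then show "Eexp M (\<lambda>w. L t x u (W (Suc t) w)) \<le> lower_add (Eexp M (\<lambda>w. ereal (inner (- X w) ((\<lambda>w. 0) w)))) (Ham M L f W t x u (\<lambda>w. 0))"
      using Ham_eq[OF t zero_conj, of x u] by (simp add: lower_add_0 zero_ereal_def[symmetric])
  qed
  have F3: "(SUP Xs \<in> {Xs. in_Lconj p M Xs}. lower_add (Eexp M (\<lambda>w. ereal (inner (- f t x u (W (Suc t) w)) (Xs w)))) (Ham M L f W t x u Xs))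
      \<le> Eexp M (\<lambda>w. L t x u (W (Suc t) w))"
    if t: "t < T" for t x u
  proof (rule SUP_least)
    fix Xs :: "'a \<Rightarrow> real^'n" assume "Xs \<in> {Xs. in_Lconj p M Xs}"
    then have Xs: "in_Lconj p M Xs" by simp
    have g: "integrable M (\<lambda>w. inner (f t x u (W (Suc t) w)) (Xs w))"
      by (rule inner_int[OF prob p f_Lp[OF t] Xs])
    have "Eexp M (\<lambda>w. ereal (inner (- f t x u (W (Suc t) w)) (Xs w))) = ereal (\<integral>w. - inner (f t x u (W (Suc t) w)) (Xs w) \<partial>M)"
      by (rule Eexp_int) (use g in auto)
    then show "lower_add (Eexp M (\<lambda>w. ereal (inner (- f t x u (W (Suc t) w)) (Xs w)))) (Ham M L f W t x u Xs)
        \<le> Eexp M (\<lambda>w. L t x u (W (Suc t) w))"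
      using Ham_eq[OF t Xs, of x u]
      by (cases "Eexp M (\<lambda>w. L t x u (W (Suc t) w))") (auto simp: lower_add_ereal)
  qed
  have F2: "(SUP Xs \<in> {Xs. in_Lconj p M Xs}. lower_add (Eexp M (\<lambda>w. ereal (inner (- X w) (Xs w)))) (Ham M L f W t x u Xs)) = \<infinity>"
    if t: "t < T" and X: "in_Lp p M X" and nae: "\<not> (AE w in M. X w = f t x u (W (Suc t) w))" for t x u X
  proof (rule ereal_top)
    fix B :: real
    define F where "F w = f t x u (W (Suc t) w)" for w
    define d where "d w = F w - X w" for w
    define k where "k w = (1 / (1 + norm (d w))) *\<^sub>R d w" for w
    define h where "h w = inner (d w) (k w)" for w
    have FL: "in_Lp p M F" unfolding F_def by (rule f_Lp[OF t])
    have Fm: "F \<in> borel_measurable M" using FL by (simp add: in_Lp_def)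
    have Xm: "X \<in> borel_measurable M" using X by (simp add: in_Lp_def)
    have dm: "d \<in> borel_measurable M" unfolding d_def using Fm Xm by measurable
    have km: "k \<in> borel_measurable M" unfolding k_def using dm by measurable
    have hm: "h \<in> borel_measurable M" unfolding h_def using dm km by measurable
    have knorm: "norm (k w) \<le> 1" for w
      unfolding k_def by (simp add: divide_le_eq_1 add_pos_nonneg)
    have h_eq: "h w = (norm (d w))\<^sup>2 / (1 + norm (d w))" for w
      unfolding h_def k_def by (simp add: power2_norm_eq_inner)
    have hnn: "0 \<le> h w" for w unfolding h_eq by simp
    have hle: "h w \<le> norm (F w) + norm (X w)" for w
    proof -
      have "h w \<le> norm (d w)" unfolding h_eq
        by (simp add: divide_le_eq power2_eq_square add_pos_nonneg distrib_left)
      also have "\<dots> \<le> norm (F w) + norm (X w)" unfolding d_def by (rule norm_triangle_ineq4)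
      finally show ?thesis .
    qed
    have hint: "integrable M h"
      by (rule Bochner_Integration.integrable_bound[where f="\<lambda>w. norm (F w) + norm (X w)"])
        (use Lp_int_norm[OF FL p fm] Lp_int_norm[OF X p fm] hm hle hnn in auto)
    have hpos: "0 < (\<integral>w. h w \<partial>M)"
    proof -
      have "0 \<le> (\<integral>w. h w \<partial>M)" using hnn by (simp add: integral_nonneg)
      moreover have "(\<integral>w. h w \<partial>M) \<noteq> 0"
      proof
        assume "(\<integral>w. h w \<partial>M) = 0"
        then have "AE w in M. h w = 0" using integral_nonneg_eq_0_iff_AE[OF hint] hnn by auto
        then have "AE w in M. X w = f t x u (W (Suc t) w)"
        proof (rule AE_mp, intro AE_I2 impI)
          fix w assume "h w = 0"
          then have "norm (d w) = 0" unfolding h_eq by (simp add: add_nonneg_eq_0_iff)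
          then show "X w = f t x u (W (Suc t) w)" unfolding d_def F_def by simp
        qed
        with nae show False by simp
      qed
      ultimately show ?thesis by simp
    qed
    define lam where "lam = max 0 B / (\<integral>w. h w \<partial>M)"
    have lam0: "0 \<le> lam" unfolding lam_def using hpos by simp
    define Xs where "Xs w = lam *\<^sub>R k w" for w
    have Xsm: "Xs \<in> borel_measurable M" unfolding Xs_def using km by measurable
    have Xsn: "norm (Xs w) \<le> lam" for w
      unfolding Xs_def using knorm[of w] lam0 by (simp add: mult_left_le)
    have XsL: "in_Lconj p M Xs"
    proof (cases "p = 1")
      case True
      then show ?thesis using Xsm Xsn by (auto simp: in_Lconj_def in_Linf_def)
    next
      case False
      have "integrable M (\<lambda>w. norm (Xs w) powr (p / (p - 1)))"
      proof (rule finite_measure.integrable_const_bound[OF fm, where B="lam powr (p / (p - 1))"])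
        show "AE w in M. norm (norm (Xs w) powr (p / (p - 1))) \<le> lam powr (p / (p - 1))"
          using Xsn p by (auto intro!: AE_I2 powr_mono2)
        show "(\<lambda>w. norm (Xs w) powr (p / (p - 1))) \<in> borel_measurable M" using Xsm by measurable
      qed
      then show ?thesis using False Xsm by (simp add: in_Lconj_def in_Lp_def)
    qed
    have mX: "in_Lp p M (\<lambda>w. - X w)" using X by (simp add: in_Lp_def)
    have i1: "integrable M (\<lambda>w. inner (- X w) (Xs w))" by (rule inner_int[OF prob p mX XsL])
    have i2: "integrable M (\<lambda>w. inner (F w) (Xs w))" by (rule inner_int[OF prob p FL XsL])
    have E1: "Eexp M (\<lambda>w. ereal (inner (- X w) (Xs w))) = ereal (\<integral>w. inner (- X w) (Xs w) \<partial>M)"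
      by (rule Eexp_int[OF i1]) simp
    have sum: "(\<integral>w. inner (- X w) (Xs w) \<partial>M) + (\<integral>w. inner (F w) (Xs w) \<partial>M) = lam * (\<integral>w. h w \<partial>M)"
    proof -
      have "(\<integral>w. inner (- X w) (Xs w) \<partial>M) + (\<integral>w. inner (F w) (Xs w) \<partial>M)
          = (\<integral>w. inner (- X w) (Xs w) + inner (F w) (Xs w) \<partial>M)"
        using i1 i2 by simp
      also have "\<dots> = (\<integral>w. lam * h w \<partial>M)"
        by (rule Bochner_Integration.integral_cong)
          (auto simp: Xs_def h_def d_def inner_diff_left inner_minus_left algebra_simps)
      also have "\<dots> = lam * (\<integral>w. h w \<partial>M)" by simp
      finally show ?thesis .
    qed
    have lamh: "lam * (\<integral>w. h w \<partial>M) = max 0 B" unfolding lam_def using hpos by simp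
    have ELnn: "0 \<le> Eexp M (\<lambda>w. L t x u (W (Suc t) w))"
      by (rule Eexp_ge0) (use L_nonneg t in auto)
    have "ereal B \<le> ereal (max 0 B) + Eexp M (\<lambda>w. L t x u (W (Suc t) w))"
      using ELnn by (metis add_increasing2 ereal_less_eq(3) max.cobounded2)
    also have "\<dots> = lower_add (Eexp M (\<lambda>w. ereal (inner (- X w) (Xs w)))) (Ham M L f W t x u Xs)"
      unfolding E1 Ham_eq[OF t XsL] F_def[symmetric] lower_add_ereal
      using sum lamh by (simp add: add.assoc[symmetric])
    also have "\<dots> \<le> (SUP Xs \<in> {Xs. in_Lconj p M Xs}. lower_add (Eexp M (\<lambda>w. ereal (inner (- X w) (Xs w)))) (Ham M L f W t x u Xs))"
      using XsL by (intro SUP_upper) simp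
    finally show "ereal B \<le> \<dots>" .
  qed
  show ?thesis
  proof (intro conjI allI impI)
    fix t x assume t: "t < T"
    define S where "S u X = (SUP Xs \<in> {Xs. in_Lconj p M Xs}. lower_add (Eexp M (\<lambda>w. ereal (inner (- X w) (Xs w)))) (Ham M L f W t x u Xs))" for u and X :: "'a \<Rightarrow> real^'n"
    have ELnn: "0 \<le> Eexp M (\<lambda>w. L t x u (W (Suc t) w))" for u
      by (rule Eexp_ge0) (use L_nonneg t in auto)
    show "V t x = (INF X \<in> {X. in_Lp p M X}. upper_add (INF u. SUP Xs \<in> {Xs. in_Lconj p M Xs}.
                    lower_add (Eexp M (\<lambda>w. ereal (inner (- X w) (Xs w)))) (Ham M L f W t x u Xs))
                 (Eexp M (\<lambda>w. V (Suc t) (X w))))"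
      unfolding S_def[symmetric]
    proof (rule antisym)
      show "V t x \<le> (INF X \<in> {X. in_Lp p M X}. upper_add (INF u. S u X) (Eexp M (\<lambda>w. V (Suc t) (X w))))"
      proof (rule INF_greatest)
        fix X :: "'a \<Rightarrow> real^'n" assume "X \<in> {X. in_Lp p M X}"
        then have X: "in_Lp p M X" by simp
        have Xm: "X \<in> borel_measurable M" using X by (simp add: in_Lp_def)
        define c where "c = Eexp M (\<lambda>w. V (Suc t) (X w))"
        have c0: "0 \<le> c" unfolding c_def by (rule Eexp_ge0) (use Vnn t in auto)
        have Snn: "0 \<le> S u X" for u
          using F1[OF t, of x u X] ELnn[of u] unfolding S_def by simp
        have "V t x \<le> (INF u. S u X + c)"
        proof (rule INF_greatest)
          fix u
          show "V t x \<le> S u X + c"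
          proof (cases "AE w in M. X w = f t x u (W (Suc t) w)")
            case True
            have "V t x \<le> Eexp M (\<lambda>w. upper_add (L t x u (W (Suc t) w)) (V (Suc t) (f t x u (W (Suc t) w))))"
              unfolding Bellman[OF t] by (rule INF_lower) simp
            also have "\<dots> = Eexp M (\<lambda>w. L t x u (W (Suc t) w)) + Eexp M (\<lambda>w. V (Suc t) (f t x u (W (Suc t) w)))"
              by (rule split[OF t])
            also have "Eexp M (\<lambda>w. V (Suc t) (f t x u (W (Suc t) w))) = c"
              unfolding c_def EV[OF t] using True by (auto intro!: nn_integral_cong_AE arg_cong[where f=enn2ereal])
            also have "Eexp M (\<lambda>w. L t x u (W (Suc t) w)) + c \<le> S u X + c"
              using F1[OF t, of x u X] unfolding S_def by (intro add_mono) auto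
            finally show ?thesis .
          next
            case False
            then have "S u X = \<infinity>" unfolding S_def by (rule F2[OF t X])
            then show ?thesis using c0 by auto
          qed
        qed
        also have "(INF u. S u X + c) = (INF u. S u X) + c"
          by (rule INF_ereal_add_left) (use c0 Snn in auto)
        finally show "V t x \<le> upper_add (INF u. S u X) (Eexp M (\<lambda>w. V (Suc t) (X w)))"
          unfolding upper_add_eq c_def .
      qed
    next
      show "(INF X \<in> {X. in_Lp p M X}. upper_add (INF u. S u X) (Eexp M (\<lambda>w. V (Suc t) (X w)))) \<le> V t x"
        unfolding Bellman[OF t]
      proof (rule INF_greatest)
        fix u
        have "(INF X \<in> {X. in_Lp p M X}. upper_add (INF u. S u X) (Eexp M (\<lambda>w. V (Suc t) (X w))))
            \<le> upper_add (INF u'. S u' (\<lambda>w. f t x u (W (Suc t) w))) (Eexp M (\<lambda>w. V (Suc t) (f t x u (W (Suc t) w))))"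
          by (rule INF_lower) (simp add: f_Lp t)
        also have "\<dots> \<le> S u (\<lambda>w. f t x u (W (Suc t) w)) + Eexp M (\<lambda>w. V (Suc t) (f t x u (W (Suc t) w)))"
          unfolding upper_add_eq by (intro add_mono INF_lower) auto
        also have "\<dots> \<le> Eexp M (\<lambda>w. L t x u (W (Suc t) w)) + Eexp M (\<lambda>w. V (Suc t) (f t x u (W (Suc t) w)))"
          using F3[OF t, of x u] unfolding S_def by (intro add_mono) auto
        also have "\<dots> = Eexp M (\<lambda>w. upper_add (L t x u (W (Suc t) w)) (V (Suc t) (f t x u (W (Suc t) w))))"
          by (rule split[OF t, symmetric])
        finally show "(INF X \<in> {X. in_Lp p M X}. upper_add (INF u. S u X) (Eexp M (\<lambda>w. V (Suc t) (X w))))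
            \<le> Eexp M (\<lambda>w. upper_add (L t x u (W (Suc t) w)) (V (Suc t) (f t x u (W (Suc t) w))))" .
      qed
    qed
  next
    fix t xs assume t: "t < T"
    show "fconj (V t) xs \<le> (INF Xs \<in> {Xs. in_Lconj p M Xs}.
               upper_add
                 (SUP u. SUP x. lower_add (ereal (inner x xs)) (- Ham M L f W t x u Xs))
                 (Eexp M (\<lambda>w. fconj (V (Suc t)) (Xs w))))"
    proof (rule INF_greatest)
      fix Xs :: "'a \<Rightarrow> real^'n" assume "Xs \<in> {Xs. in_Lconj p M Xs}"
      then have Xs: "in_Lconj p M Xs" by simp
      define A where "A = (SUP u. SUP x. lower_add (ereal (inner x xs)) (- Ham M L f W t x u Xs))"
      define B where "B = Eexp M (\<lambda>w. fconj (V (Suc t)) (Xs w))"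
      have "fconj (V t) xs \<le> A + B"
        unfolding fconj_def
      proof (rule SUP_least)
        fix x
        define c where "c = inner x xs"
        have "lower_add (ereal (inner x xs)) (- V t x) = ereal c - V t x"
          by (simp add: lower_add_ereal minus_ereal_def c_def)
        also have "\<dots> = (SUP u. ereal c - Eexp M (\<lambda>w. upper_add (L t x u (W (Suc t) w)) (V (Suc t) (f t x u (W (Suc t) w)))))"
          unfolding Bellman[OF t] by (rule SUP_ereal_minus_right[symmetric]) auto
        also have "\<dots> \<le> A + B"
        proof (rule SUP_least)
          fix u
          define F where "F w = f t x u (W (Suc t) w)" for w
          define EL where "EL = Eexp M (\<lambda>w. L t x u (W (Suc t) w))"
          define EVf where "EVf = Eexp M (\<lambda>w. V (Suc t) (F w))"
          have sp: "Eexp M (\<lambda>w. upper_add (L t x u (W (Suc t) w)) (V (Suc t) (f t x u (W (Suc t) w)))) = EL + EVf"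
            unfolding EL_def EVf_def F_def by (rule split[OF t])
          have EL0: "0 \<le> EL" unfolding EL_def by (rule Eexp_ge0) (use L_nonneg t in auto)
          have EV0: "0 \<le> EVf" unfolding EVf_def by (rule Eexp_ge0) (use Vnn t in auto)
          show "ereal c - Eexp M (\<lambda>w. upper_add (L t x u (W (Suc t) w)) (V (Suc t) (f t x u (W (Suc t) w)))) \<le> A + B"
          proof (cases "EL + EVf = \<infinity>")
            case True
            show ?thesis unfolding sp True by simp
          next
            case False
            then have "EL \<noteq> \<infinity>" "EVf \<noteq> \<infinity>" using EL0 EV0 by auto
            then obtain a b where ab: "EL = ereal a" "EVf = ereal b" using EL0 EV0
              by (cases EL; cases EVf) auto
            have FL: "in_Lp p M F" unfolding F_def by (rule f_Lp[OF t])
            have g: "integrable M (\<lambda>w. inner (F w) (Xs w))" by (rule inner_int[OF prob p FL Xs])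
            have H: "Ham M L f W t x u Xs = ereal (\<integral>w. inner (F w) (Xs w) \<partial>M) + EL"
              unfolding EL_def F_def by (rule Ham_eq[OF t Xs])
            have hA: "ereal c - (ereal (\<integral>w. inner (F w) (Xs w) \<partial>M) + EL) \<le> A"
              unfolding A_def
              by (rule SUP_upper2[of u], simp, rule SUP_upper2[of x], simp)
                 (simp add: H lower_add_ereal c_def minus_ereal_def)
            have Fm: "F \<in> borel_measurable M" using FL by (simp add: in_Lp_def)
            have fin: "(\<integral>\<^sup>+ w. e2ennreal (V (Suc t) (F w)) \<partial>M) < \<infinity>"
              using \<open>EVf \<noteq> \<infinity>\<close> unfolding EVf_def EV[OF t] by (rule enn2ereal_ne_top)
            have "ereal (\<integral>w. inner (F w) (Xs w) \<partial>M) - EVf = Eexp M (\<lambda>w. ereal (inner (F w) (Xs w)) - V (Suc t) (F w))"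
              unfolding EVf_def EV[OF t]
              by (rule E_sub[OF g Vm[OF t Fm] _ fin, symmetric]) (use Vnn t in auto)
            also have "\<dots> \<le> B" unfolding B_def
            proof (rule Eexp_mono)
              fix w
              have "ereal (inner (F w) (Xs w)) - V (Suc t) (F w) = lower_add (ereal (inner (F w) (Xs w))) (- V (Suc t) (F w))"
                by (simp add: lower_add_ereal minus_ereal_def)
              also have "\<dots> \<le> fconj (V (Suc t)) (Xs w)"
                unfolding fconj_def by (rule SUP_upper) simp
              finally show "ereal (inner (F w) (Xs w)) - V (Suc t) (F w) \<le> fconj (V (Suc t)) (Xs w)" .
            qed
            finally have hB: "ereal (\<integral>w. inner (F w) (Xs w) \<partial>M) - EVf \<le> B" .
            have "ereal c - (EL + EVf) = (ereal c - (ereal (\<integral>w. inner (F w) (Xs w) \<partial>M) + EL))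
                + (ereal (\<integral>w. inner (F w) (Xs w) \<partial>M) - EVf)"
              unfolding ab by simp
            also have "\<dots> \<le> A + B" using hA hB by (rule add_mono)
            finally show ?thesis unfolding sp .
          qed
        qed
        finally show "lower_add (ereal (inner x xs)) (- V t x) \<le> A + B" .
      qed
      then show "fconj (V t) xs \<le> upper_add (SUP u. SUP x. lower_add (ereal (inner x xs)) (- Ham M L f W t x u Xs))
                 (Eexp M (\<lambda>w. fconj (V (Suc t)) (Xs w)))"
        unfolding upper_add_eq A_def B_def .
    qed
  qed
qed

end
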